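(* For all $x\in\mathbb{R}$, $\Lambda^*_\nu(x)\ge\big(\sqrt{1+|x|}-1\big)^2$.
   Context: $\nu$ is the symmetric exponential distribution on $\mathbb{R}$ with density $\frac12e^{-|x|}$, and $\Lambda^*_\nu(x)=\sup_y\{xy-\ln\int e^{yz}d\nu(z)\}$ is its Cramer transform; explicitly $\Lambda^*_\nu(x)=\sqrt{x^2+1}-1-\ln\frac{\sqrt{x^2+1}+1}{2}$. *)

theory Defs
  imports "HOL-Analysis.Analysis"
begin

definition nu :: "real measure" where
  "nu = density lborel (\<lambda>z. ennreal (exp (- \<bar>z\<bar>) / 2))"

definition mgf_nu :: "real \<Rightarrow> ennreal" where
  "mgf_nu y = (\<integral>\<^sup>+ z. ennreal (exp (y * z)) \<partial>nu)"

text \<open>Cramer transform sup_y (x y - ln mgf(y)); values y with infinite mgf contribute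
  minus infinity and are therefore omitted from the supremum.\<close>
definition cramer_nu :: "real \<Rightarrow> ereal" where
  "cramer_nu x = (SUP y \<in> {y. mgf_nu y < \<infinity>}. ereal (x * y - ln (enn2real (mgf_nu y))))"

end

theory Submission
  imports Defs
begin

lemma half_pos:
  fixes a :: real assumes "a > 0"
  shows "(\<integral>\<^sup>+ z. ennreal (indicator {0..} z * exp (-a*z)) \<partial>lborel) = ennreal (1/a)"
proof -
  have "((\<lambda>x::real. exp (-a*x)) has_integral exp (-a*0)/a) {0..}"
    by (rule has_integral_exp_minus_to_infinity[OF assms])
  then have "integral\<^sup>N lborel (\<lambda>x. indicator {0..} x * exp (-a*x)) = exp (-a*0)/a"
    by (intro nn_integral_has_integral_lebesgue) auto
  then show ?thesis by simp
qed

lemma half_neg: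
  fixes a :: real assumes "a > 0"
  shows "(\<integral>\<^sup>+ z. ennreal (indicator {..0} z * exp (a*z)) \<partial>lborel) = ennreal (1/a)"
proof -
  have "(\<integral>\<^sup>+ z. ennreal (indicator {..0} z * exp (a*z)) \<partial>lborel)
     = ennreal \<bar>-1\<bar> * (\<integral>\<^sup>+ z. ennreal (indicator {..0} (0 + -1*z) * exp (a*(0 + -1*z))) \<partial>lborel)"
    by (rule nn_integral_real_affine) auto
  also have "(\<lambda>z. ennreal (indicator {..0} (0 + -1*z) * exp (a*(0 + -1*z)))) = (\<lambda>z. ennreal (indicator {0..} z * exp (-a*z)))"
    by (auto simp: indicator_def fun_eq_iff)
  finally show ?thesis using half_pos[OF assms] by simp
qed

lemma ennreal_half: "ennreal p / 2 = ennreal (p / 2)"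
proof (cases "p \<ge> 0")
  case True then show ?thesis using divide_ennreal[of p 2] by simp
next
  case False then show ?thesis by (simp add: ennreal_neg)
qed

lemma mgf_le:
  fixes y :: real assumes "\<bar>y\<bar> < 1"
  shows "mgf_nu y \<le> ennreal (1/(1-y^2))"
proof -
  have "mgf_nu y = (\<integral>\<^sup>+ z. ennreal (exp (- \<bar>z\<bar>) / 2) * ennreal (exp (y * z)) \<partial>lborel)"
    unfolding mgf_nu_def nu_def by (subst nn_integral_density) auto
  also have "\<dots> \<le> (\<integral>\<^sup>+ z. ennreal (indicator {0..} z * exp (-(1-y)*z)) / 2 + ennreal (indicator {..0} z * exp ((1+y)*z)) / 2 \<partial>lborel)"
  proof (rule nn_integral_mono)
    fix z :: real
    have "exp (- \<bar>z\<bar>) / 2 * exp (y * z) \<le> (indicator {0..} z * exp (-(1-y)*z)) / 2 + (indicator {..0} z * exp ((1+y)*z)) / 2"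
    proof (cases "z \<ge> 0")
      case True
      then have "- \<bar>z\<bar> + y * z = -(1-y)*z" by (simp add: algebra_simps)
      then have "exp (- \<bar>z\<bar>) / 2 * exp (y * z) = exp (-(1-y)*z) / 2"
        by (metis exp_add times_divide_eq_left)
      then show ?thesis using True by (simp add: indicator_def)
    next
      case False
      then have "- \<bar>z\<bar> + y * z = (1+y)*z" by (simp add: algebra_simps)
      then have "exp (- \<bar>z\<bar>) / 2 * exp (y * z) = exp ((1+y)*z) / 2"
        by (metis exp_add times_divide_eq_left)
      then show ?thesis using False by (simp add: indicator_def)
    qed
    then show "ennreal (exp (- \<bar>z\<bar>) / 2) * ennreal (exp (y * z)) \<le> ennreal (indicator {0..} z * exp (-(1-y)*z)) / 2 + ennreal (indicator {..0} z * exp ((1+y)*z)) / 2"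
    proof -
      have "ennreal (exp (- \<bar>z\<bar>) / 2) * ennreal (exp (y * z)) = ennreal (exp (- \<bar>z\<bar>) / 2 * exp (y * z))"
        by (rule ennreal_mult[symmetric]) auto
      moreover have "ennreal (indicator {0..} z * exp (-(1-y)*z)) / 2 + ennreal (indicator {..0} z * exp ((1+y)*z)) / 2
          = ennreal ((indicator {0..} z * exp (-(1-y)*z)) / 2 + (indicator {..0} z * exp ((1+y)*z)) / 2)"
        unfolding ennreal_half by (subst ennreal_plus) auto
      ultimately show ?thesis using \<open>exp (- \<bar>z\<bar>) / 2 * exp (y * z) \<le> _\<close> by (simp only: ennreal_leI)
    qed
  qed
  also have "\<dots> = (\<integral>\<^sup>+ z. ennreal (indicator {0..} z * exp (-(1-y)*z)) \<partial>lborel) / 2 + (\<integral>\<^sup>+ z. ennreal (indicator {..0} z * exp ((1+y)*z)) \<partial>lborel) / 2"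
    by (subst nn_integral_add) (auto simp: nn_integral_divide)
  also have "\<dots> = ennreal (1/(1-y)) / 2 + ennreal (1/(1+y)) / 2"
    using assms by (subst half_pos, simp, subst half_neg, auto)
  also have "\<dots> = ennreal (1/(1-y^2))"
  proof -
    have h: "1 - y \<noteq> 0" "1 + y \<noteq> 0" using assms by auto
    have "1/(1-y)/2 + 1/(1+y)/2 = 1/((1-y)*(1+y))"
      using h by (simp add: divide_simps) (simp add: algebra_simps)
    also have "(1-y)*(1+y) = 1 - y^2" by (simp add: power2_eq_square algebra_simps)
    finally have "1/(1-y)/2 + 1/(1+y)/2 = 1/(1-y^2)" .
    moreover have "1/(1-y) \<ge> 0" "1/(1+y) \<ge> 0" using assms by auto
    ultimately show ?thesis unfolding ennreal_half by (metis divide_nonneg_nonneg ennreal_plus zero_le_numeral)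
  qed
  finally show ?thesis .
qed

lemma mgf_ge:
  fixes y :: real assumes "\<bar>y\<bar> < 1"
  shows "ennreal (1/(2*(1-y))) \<le> mgf_nu y"
proof -
  have "ennreal (1/(2*(1-y))) = (\<integral>\<^sup>+ z. ennreal (indicator {0..} z * exp (-(1-y)*z)) \<partial>lborel) / 2"
  proof -
    have "1/(1-y) \<ge> 0" using assms by simp
    then have "ennreal (1/(1-y)) / 2 = ennreal (1/(1-y)/2)"
      using divide_ennreal[of "1/(1-y)" 2] by simp
    then show ?thesis using assms by (subst half_pos) auto
  qed
  also have "\<dots> = (\<integral>\<^sup>+ z. ennreal (indicator {0..} z * exp (-(1-y)*z)) / 2 \<partial>lborel)"
    by (simp add: nn_integral_divide)
  also have "\<dots> \<le> (\<integral>\<^sup>+ z. ennreal (exp (- \<bar>z\<bar>) / 2) * ennreal (exp (y * z)) \<partial>lborel)"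
  proof (rule nn_integral_mono)
    fix z :: real
    have "(indicator {0..} z * exp (-(1-y)*z)) / 2 \<le> exp (- \<bar>z\<bar>) / 2 * exp (y * z)"
    proof (cases "z \<ge> 0")
      case True
      then have "- \<bar>z\<bar> + y * z = -(1-y)*z" by (simp add: algebra_simps)
      then have "exp (- \<bar>z\<bar>) / 2 * exp (y * z) = exp (-(1-y)*z) / 2"
        by (metis exp_add times_divide_eq_left)
      then show ?thesis using True by (simp add: indicator_def)
    qed (simp add: indicator_def)
    then show "ennreal (indicator {0..} z * exp (-(1-y)*z)) / 2 \<le> ennreal (exp (- \<bar>z\<bar>) / 2) * ennreal (exp (y * z))"
    proof -
      have "ennreal (exp (- \<bar>z\<bar>) / 2) * ennreal (exp (y * z)) = ennreal (exp (- \<bar>z\<bar>) / 2 * exp (y * z))"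
        by (rule ennreal_mult[symmetric]) auto
      moreover have "ennreal (indicator {0..} z * exp (-(1-y)*z)) / 2 = ennreal ((indicator {0..} z * exp (-(1-y)*z)) / 2)"
        by (rule ennreal_half)
      ultimately show ?thesis using \<open>_ \<le> exp (- \<bar>z\<bar>) / 2 * exp (y * z)\<close> by (simp only: ennreal_leI)
    qed
  qed
  also have "\<dots> = mgf_nu y"
    unfolding mgf_nu_def nu_def by (subst nn_integral_density) auto
  finally show ?thesis .
qed

lemma real_ineq:
  fixes a :: real assumes "a \<ge> 0"
  defines "s \<equiv> sqrt (1 + a)"
  shows "(s - 1)^2 \<le> a * (1 - 1/s) + ln (1 - (1 - 1/s)^2)"
proof -
  have s1: "s \<ge> 1" unfolding s_def using assms by simp
  have a: "a = s^2 - 1" unfolding s_def using assms by simp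
  have e: "1 - (1 - 1/s)^2 = (2* s - 1)/s^2" using s1 by (simp add: field_simps power2_eq_square)
  have pos: "(2* s - 1)/s^2 > 0" using s1 by simp
  have "ln (s^2/(2* s - 1)) \<le> s^2/(2* s - 1) - 1" using s1 by (intro ln_le_minus_one) simp
  moreover have "ln (s^2/(2* s - 1)) = - ln ((2* s - 1)/s^2)" using pos s1 by (simp add: ln_div)
  ultimately have l: "ln ((2* s - 1)/s^2) \<ge> -((s-1)^2/(2* s - 1))"
    using s1 by (simp add: field_simps power2_eq_square)
  have "(s-1)^2 + (s-1)^2/(2* s - 1) \<le> a * (1 - 1/s)"
  proof -
    have "(s-1)^2/(2* s - 1) \<le> (s-1)^2/s" using s1 by (intro divide_left_mono) auto
    moreover have "a * (1 - 1/s) = (s-1)^2 + (s-1)^2/s" unfolding a using s1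
      by (simp add: field_simps power2_eq_square)
    ultimately show ?thesis by simp
  qed
  then show ?thesis using l e by simp
qed

theorem lemma8:
  fixes x :: real
  shows "ereal ((sqrt (1 + \<bar>x\<bar>) - 1) ^ 2) \<le> cramer_nu x"
proof -
  define s where "s = sqrt (1 + \<bar>x\<bar>)"
  define y0 where "y0 = 1 - 1/s"
  define y where "y = (if x \<ge> 0 then y0 else -y0)"
  have s1: "s \<ge> 1" unfolding s_def by simp
  have y0: "0 \<le> y0" "y0 < 1" unfolding y0_def using s1 by auto
  have ay: "\<bar>y\<bar> < 1" unfolding y_def using y0 by auto
  have xy: "x * y = \<bar>x\<bar> * y0" unfolding y_def by auto
  have y2: "y^2 = y0^2" unfolding y_def by auto
  have up: "mgf_nu y \<le> ennreal (1/(1-y^2))" by (rule mgf_le[OF ay])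
  have lo: "ennreal (1/(2*(1-y))) \<le> mgf_nu y" by (rule mgf_ge[OF ay])
  have fin: "mgf_nu y < \<infinity>" using up by (simp add: order_le_less_trans)
  have p1: "1 - y^2 > 0" using ay by (simp add: abs_square_less_1)
  have r_up: "enn2real (mgf_nu y) \<le> 1/(1-y^2)"
    using enn2real_mono[OF up] p1 by simp
  have r_lo: "1/(2*(1-y)) \<le> enn2real (mgf_nu y)"
  proof -
    have "1/(2*(1-y)) \<ge> 0" using ay by simp
    then show ?thesis using enn2real_mono[OF lo] fin by (simp add: top.not_eq_extremum)
  qed
  have rpos: "enn2real (mgf_nu y) > 0"
  proof -
    have "1/(2*(1-y)) > 0" using ay by simp
    then show ?thesis using r_lo by linarith
  qed
  have "ln (enn2real (mgf_nu y)) \<le> ln (1/(1-y^2))" using r_up rpos by (rule ln_le_cancel_iff[THEN iffD2, rotated 2]) (use p1 in simp_all)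
  also have "\<dots> = - ln (1 - y0^2)" using p1 y2 by (simp add: ln_div)
  finally have lnb: "ln (enn2real (mgf_nu y)) \<le> - ln (1 - y0^2)" .
  have "(s - 1)^2 \<le> \<bar>x\<bar> * y0 + ln (1 - y0^2)"
    unfolding y0_def s_def by (rule real_ineq) simp
  then have "(s - 1)^2 \<le> x * y - ln (enn2real (mgf_nu y))" using xy lnb by simp
  then have "ereal ((s - 1)^2) \<le> ereal (x * y - ln (enn2real (mgf_nu y)))" by simp
  also have "\<dots> \<le> cramer_nu x" unfolding cramer_nu_def
    by (rule SUP_upper) (use fin in auto)
  finally show ?thesis unfolding s_def .
qed

end
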